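(* Let $\vec{\mathcal H}=(V,\mathcal A)$ be a directed hypergraph and $s,t\in V$ distinct. Let $\vec G=(V',A')$ be the directed graph with $V'=V\cup\{w_{(X,v)}:(X,v)\in\mathcal A\}$ (one new vertex per hyperarc) whose arc set contains, for every hyperarc $(X,v)\in\mathcal A$, the arc $w_{(X,v)}v$ and, for every $x\in X$, $|\mathcal A|+1$ parallel arcs $x\,w_{(X,v)}$; let $\overleftarrow G$ be obtained from $\vec G$ by reversing every arc. Then $S^{\vec{\mathcal H}}_{s,t}=V\cap S^{\vec G}_{s,t}$ and $T^{\vec{\mathcal H}}_{t,s}=V\cap S^{\overleftarrow G}_{t,s}$.
   Context: A directed hypergraph $\vec{\mathcal H}=(V,\mathcal A)$ has finite vertex set $V$ and a finite multiset $\mathcal A$ of hyperarcs $(X,v)$ with $X\subseteq V$, $v\in V\setminus X$. For $\emptyset\ne Z\subsetneq V$: $d^+_{\vec{\mathcal H}}(Z)$ is the number of hyperarcs $(X,v)$ with $v\notin Z$ and $X\cap Z\ne\emptyset$; $d^-_{\vec{\mathcal H}}(Z)$ is the number of hyperarcs $(X,v)$ with $v\in Z$ and $X\not\subseteq Z$. In a directed graph $G$, $d^+_G(Z)$ is the number of arcs with tail in $Z$ and head outside $Z$. For vertices $a\ne b$, an $(a,b)$-separator is a vertex set containing $a$ but not $b$. $S^{\vec{\mathcal H}}_{s,t}$ denotes the (unique) $(s,t)$-separator of minimum $d^+_{\vec{\mathcal H}}$ that is contained in every $(s,t)$-separator of minimum $d^+_{\vec{\mathcal H}}$; $T^{\vec{\mathcal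 H}}_{t,s}$ denotes the (unique) $(t,s)$-separator of minimum $d^-_{\vec{\mathcal H}}$ that is contained in every $(t,s)$-separator of minimum $d^-_{\vec{\mathcal H}}$. For a directed graph $G$, $S^{G}_{a,b}$ denotes the unique $(a,b)$-separator of minimum $d^+_G$ contained in every $(a,b)$-separator of minimum $d^+_G$. (Uniqueness follows from submodularity of these degree functions.) *)

theory Defs
  imports Main "HOL-Library.Multiset"
begin

text \<open>A directed hypergraph is given by a finite vertex set V and a finite family of
hyperarcs indexed by a finite set E (this represents a finite multiset of hyperarcs;
parallel hyperarcs have distinct indices). Hyperarc e is (fst (A e), snd (A e)) = (X, v).\<close>

definition dir_hypergraph :: "'a set \<Rightarrow> 'e set \<Rightarrow> ('e \<Rightarrow> 'a set \<times> 'a) \<Rightarrow> bool" where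
  "dir_hypergraph V E A \<longleftrightarrow> finite V \<and> finite E \<and>
     (\<forall>e\<in>E. fst (A e) \<subseteq> V \<and> snd (A e) \<in> V \<and> snd (A e) \<notin> fst (A e))"

definition hyp_dout :: "'e set \<Rightarrow> ('e \<Rightarrow> 'a set \<times> 'a) \<Rightarrow> 'a set \<Rightarrow> nat" where
  "hyp_dout E A Z = card {e\<in>E. snd (A e) \<notin> Z \<and> fst (A e) \<inter> Z \<noteq> {}}"

definition hyp_din :: "'e set \<Rightarrow> ('e \<Rightarrow> 'a set \<times> 'a) \<Rightarrow> 'a set \<Rightarrow> nat" where
  "hyp_din E A Z = card {e\<in>E. snd (A e) \<in> Z \<and> \<not> fst (A e) \<subseteq> Z}"

text \<open>Directed (multi)graph: arcs form a multiset of (tail, head) pairs.\<close>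
definition graph_dout :: "('v \<times> 'v) multiset \<Rightarrow> 'v set \<Rightarrow> nat" where
  "graph_dout Arcs Z = size (filter_mset (\<lambda>(x, y). x \<in> Z \<and> y \<notin> Z) Arcs)"

definition separator :: "'v set \<Rightarrow> 'v \<Rightarrow> 'v \<Rightarrow> 'v set \<Rightarrow> bool" where
  "separator W a b Z \<longleftrightarrow> Z \<subseteq> W \<and> a \<in> Z \<and> b \<notin> Z"

definition min_separator :: "'v set \<Rightarrow> ('v set \<Rightarrow> nat) \<Rightarrow> 'v \<Rightarrow> 'v \<Rightarrow> 'v set \<Rightarrow> bool" where
  "min_separator W f a b Z \<longleftrightarrow> separator W a b Z \<and>
     (\<forall>Z'. separator W a b Z' \<longrightarrow> f Z \<le> f Z')"

definition smallest_min_sep :: "'v set \<Rightarrow> ('v set \<Rightarrow> nat) \<Rightarrow> 'v \<Rightarrow> 'v \<Rightarrow> 'v set" where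
  "smallest_min_sep W f a b = (THE Z. min_separator W f a b Z \<and>
     (\<forall>Z'. min_separator W f a b Z' \<longrightarrow> Z \<subseteq> Z'))"

text \<open>The auxiliary digraph: vertices Inl v (v in V) and Inr e (one per hyperarc).\<close>
definition aux_vertices :: "'a set \<Rightarrow> 'e set \<Rightarrow> ('a + 'e) set" where
  "aux_vertices V E = Inl ` V \<union> Inr ` E"

definition aux_arcs :: "'e set \<Rightarrow> ('e \<Rightarrow> 'a set \<times> 'a) \<Rightarrow> (('a + 'e) \<times> ('a + 'e)) multiset" where
  "aux_arcs E A = (\<Sum>e\<in>E. {#(Inr e, Inl (snd (A e)))#} +
      (\<Sum>x\<in>fst (A e). replicate_mset (card E + 1) (Inl x, Inr e)))"

definition reverse_arcs :: "('v \<times> 'v) multiset \<Rightarrow> ('v \<times> 'v) multiset" where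
  "reverse_arcs Arcs = image_mset prod.swap Arcs"

end

theory Submission
  imports Defs
begin


lemma size_filter_sum: "finite I \<Longrightarrow> size (filter_mset P (\<Sum>i\<in>I. F i)) = (\<Sum>i\<in>I. size (filter_mset P (F i)))"
  by (induction I rule: finite_induct) auto

lemma image_sum_mset': "finite I \<Longrightarrow> image_mset f (\<Sum>i\<in>I. F i) = (\<Sum>i\<in>I. image_mset f (F i))"
  by (induction I rule: finite_induct) auto

lemma size_filter_replicate: "size (filter_mset P (replicate_mset n a)) = (if P a then n else 0)"
  by (induction n) auto

lemma sum_if_card: "finite X \<Longrightarrow> (\<Sum>x\<in>X. if P x then (n::nat) else 0) = n * card {x\<in>X. P x}"
  by (simp add: sum.If_cases Int_def)

lemma cost1:
  assumes "finite E" "\<And>e. e \<in> E \<Longrightarrow> finite (fst (A e))"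
  shows "graph_dout (aux_arcs E A) Z = (\<Sum>e\<in>E. (if Inr e \<in> Z \<and> Inl (snd (A e)) \<notin> Z then 1 else 0)
     + (card E + 1) * card {x\<in>fst (A e). Inl x \<in> Z \<and> Inr e \<notin> Z})"
  unfolding graph_dout_def aux_arcs_def
  apply (simp only: size_filter_sum assms(1))
  apply (rule sum.cong, simp)
  apply (simp only: filter_union_mset size_union size_filter_sum assms(2) size_filter_replicate)
  apply (subst sum_if_card, simp add: assms(2))
  apply simp
  done

lemma cost2:
  assumes "finite E" "\<And>e. e \<in> E \<Longrightarrow> finite (fst (A e))"
  shows "graph_dout (reverse_arcs (aux_arcs E A)) Z = (\<Sum>e\<in>E. (if Inl (snd (A e)) \<in> Z \<and> Inr e \<notin> Z then 1 else 0)
     + (card E + 1) * card {x\<in>fst (A e). Inr e \<in> Z \<and> Inl x \<notin> Z})"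
  unfolding graph_dout_def aux_arcs_def reverse_arcs_def
  apply (simp only: filter_mset_image_mset size_image_mset)
  apply (simp only: size_filter_sum assms(1))
  apply (rule sum.cong, simp)
  apply (simp only: filter_union_mset size_union size_filter_sum assms(2) size_filter_replicate)
  apply (subst sum_if_card, simp add: assms(2))
  apply simp
  done



lemma smallest_eq:
  assumes "min_separator W f a b Z" "\<forall>Z'. min_separator W f a b Z' \<longrightarrow> Z \<subseteq> Z'"
  shows "smallest_min_sep W f a b = Z"
  unfolding smallest_min_sep_def
  apply (rule the_equality)
  using assms by blast+

lemma exists_smallest:
  assumes fin: "finite W" and aW: "a \<in> W" and ab: "a \<noteq> b"
    and sub: "\<And>X Y. separator W a b X \<Longrightarrow> separator W a b Y \<Longrightarrow> f (X \<inter> Y) + f (X \<union> Y) \<le> f X + f Y"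
  shows "\<exists>Z. min_separator W f a b Z \<and> (\<forall>Z'. min_separator W f a b Z' \<longrightarrow> Z \<subseteq> Z')"
proof -
  have "separator W a b {a}" using aW ab by (simp add: separator_def)
  then have "\<exists>k. \<exists>Z. separator W a b Z \<and> f Z = k" by blast
  then obtain k where k: "\<exists>Z. separator W a b Z \<and> f Z = k" and kmin: "\<And>k'. (\<exists>Z. separator W a b Z \<and> f Z = k') \<Longrightarrow> k \<le> k'"
    using LeastI_ex[of "\<lambda>k. \<exists>Z. separator W a b Z \<and> f Z = k"] Least_le[of "\<lambda>k. \<exists>Z. separator W a b Z \<and> f Z = k"] by blast
  have minchar: "min_separator W f a b Z \<longleftrightarrow> separator W a b Z \<and> f Z = k" for Z
    using k kmin unfolding min_separator_def by (smt (verit) le_antisym)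
  obtain Z0 where "min_separator W f a b Z0" using k minchar by blast
  then have "\<exists>c. \<exists>Z. min_separator W f a b Z \<and> card Z = c" by blast
  then obtain c where c: "\<exists>Z. min_separator W f a b Z \<and> card Z = c" and cmin: "\<And>c'. (\<exists>Z. min_separator W f a b Z \<and> card Z = c') \<Longrightarrow> c \<le> c'"
    using LeastI_ex[of "\<lambda>c. \<exists>Z. min_separator W f a b Z \<and> card Z = c"] Least_le[of "\<lambda>c. \<exists>Z. min_separator W f a b Z \<and> card Z = c"] by blast
  then obtain Z where Z: "min_separator W f a b Z" "card Z = c" by blast
  have "Z \<subseteq> Z'" if Z': "min_separator W f a b Z'" for Z'
  proof -
    have sZ: "separator W a b Z" and sZ': "separator W a b Z'" using Z Z' minchar by auto
    have "separator W a b (Z \<inter> Z')" "separator W a b (Z \<union> Z')" using sZ sZ' by (auto simp: separator_def)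
    then have "k \<le> f (Z \<inter> Z')" "k \<le> f (Z \<union> Z')" using kmin by blast+
    moreover have "f (Z \<inter> Z') + f (Z \<union> Z') \<le> f Z + f Z'" using sub sZ sZ' by blast
    moreover have "f Z = k" "f Z' = k" using Z Z' minchar by auto
    ultimately have "f (Z \<inter> Z') = k" by linarith
    then have m: "min_separator W f a b (Z \<inter> Z')" using minchar \<open>separator W a b (Z \<inter> Z')\<close> by blast
    have "c \<le> card (Z \<inter> Z')" using cmin m by blast
    moreover have "finite Z" using sZ fin by (meson finite_subset separator_def)
    ultimately have "Z \<inter> Z' = Z"
      using Z(2) by (meson Int_lower1 card_seteq finite_Int)
    then show ?thesis by blast
  qed
  then show ?thesis using Z by blast
qed


lemma transfer:
  assumes exS1: "min_separator V h a b S" and exS2: "\<forall>Z. min_separator V h a b Z \<longrightarrow> S \<subseteq> Z"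
  and projsep: "\<And>Z'. separator W a' b' Z' \<Longrightarrow> separator V a b (proj Z')"
  and extsep: "\<And>Z. separator V a b Z \<Longrightarrow> separator W a' b' (ext Z)"
  and projext: "proj (ext S) = S"
  and le: "\<And>Z'. separator W a' b' Z' \<Longrightarrow> h (proj Z') \<le> f Z'"
  and eq: "\<And>Z. separator V a b Z \<Longrightarrow> f (ext Z) = h Z"
  and sub: "\<And>Z'. min_separator W f a' b' Z' \<Longrightarrow> S \<subseteq> proj Z' \<Longrightarrow> ext S \<subseteq> Z'"
  shows "S = proj (smallest_min_sep W f a' b')"
proof -
  have sS: "separator V a b S" using exS1 unfolding min_separator_def by simp
  have hS: "h S \<le> h Y" if "separator V a b Y" for Y
    using exS1 that unfolding min_separator_def by simp
  have sE: "separator W a' b' (ext S)" by (rule extsep[OF sS])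
  have fE: "f (ext S) \<le> f Z'" if Z': "separator W a' b' Z'" for Z'
  proof -
    have "h S \<le> h (proj Z')" by (rule hS[OF projsep[OF Z']])
    also have "\<dots> \<le> f Z'" by (rule le[OF Z'])
    finally show ?thesis using eq[OF sS] by simp
  qed
  have m1: "min_separator W f a' b' (ext S)" unfolding min_separator_def using sE fE by blast
  have sub2: "ext S \<subseteq> Z'" if Z': "min_separator W f a' b' Z'" for Z'
  proof -
    have sZ': "separator W a' b' Z'" using Z' unfolding min_separator_def by simp
    have fZ': "f Z' \<le> f Y'" if "separator W a' b' Y'" for Y'
      using Z' that unfolding min_separator_def by simp
    have hp: "h (proj Z') \<le> h Y" if Y: "separator V a b Y" for Y
    proof -
      have "h (proj Z') \<le> f Z'" by (rule le[OF sZ'])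
      also have "\<dots> \<le> f (ext Y)" by (rule fZ'[OF extsep[OF Y]])
      also have "\<dots> = h Y" by (rule eq[OF Y])
      finally show ?thesis .
    qed
    have "min_separator V h a b (proj Z')" unfolding min_separator_def
      using projsep[OF sZ'] hp by blast
    then have "S \<subseteq> proj Z'" using exS2 by blast
    then show ?thesis by (rule sub[OF Z'])
  qed
  have "smallest_min_sep W f a' b' = ext S"
    by (rule smallest_eq[OF m1]) (use sub2 in blast)
  then show ?thesis using projext by simp
qed


lemma card_ge1: "finite X \<Longrightarrow> x \<in> {x\<in>X. P x} \<Longrightarrow> 1 \<le> card {x\<in>X. P x}"
proof -
  assume a: "finite X" "x \<in> {x\<in>X. P x}"
  then have "{x\<in>X. P x} \<noteq> {}" "finite {x\<in>X. P x}" by auto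
  then have "0 < card {x\<in>X. P x}" by (simp add: card_gt_0_iff)
  then show ?thesis by simp
qed

lemma hyp_dout_sum: "finite E \<Longrightarrow> hyp_dout E A Z = (\<Sum>e\<in>E. if snd (A e) \<notin> Z \<and> fst (A e) \<inter> Z \<noteq> {} then 1 else 0)"
  unfolding hyp_dout_def by (subst sum_if_card) auto

lemma hyp_din_sum: "finite E \<Longrightarrow> hyp_din E A Z = (\<Sum>e\<in>E. if snd (A e) \<in> Z \<and> \<not> fst (A e) \<subseteq> Z then 1 else 0)"
  unfolding hyp_din_def by (subst sum_if_card) auto

lemma submod1: "(if h \<notin> X \<inter> Y \<and> S \<inter> (X \<inter> Y) \<noteq> {} then 1 else 0) + (if h \<notin> X \<union> Y \<and> S \<inter> (X \<union> Y) \<noteq> {} then 1 else 0)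
  \<le> (if h \<notin> X \<and> S \<inter> X \<noteq> {} then 1 else 0) + (if h \<notin> Y \<and> S \<inter> Y \<noteq> {} then (1::nat) else 0)"
  by (cases "h \<in> X"; cases "h \<in> Y"; cases "S \<inter> X = {}"; cases "S \<inter> Y = {}") auto
lemma submod2: "(if h \<in> X \<inter> Y \<and> \<not> S \<subseteq> X \<inter> Y then 1 else 0) + (if h \<in> X \<union> Y \<and> \<not> S \<subseteq> X \<union> Y then 1 else 0)
  \<le> (if h \<in> X \<and> \<not> S \<subseteq> X then 1 else 0) + (if h \<in> Y \<and> \<not> S \<subseteq> Y then (1::nat) else 0)"
  by (cases "h \<in> X"; cases "h \<in> Y"; cases "S \<subseteq> X"; cases "S \<subseteq> Y") auto

lemma part1:
  fixes V :: "'a set" and E :: "'e set" and A :: "'e \<Rightarrow> 'a set \<times> 'a" and s t :: 'a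
  assumes H: "dir_hypergraph V E A"
    and "s \<in> V" and "t \<in> V" and "s \<noteq> t"
  shows "smallest_min_sep V (hyp_dout E A) s t =
           {v \<in> V. Inl v \<in> smallest_min_sep (aux_vertices V E) (graph_dout (aux_arcs E A)) (Inl s) (Inl t)}"
proof -
  have finV: "finite V" and finE: "finite E" and XV: "\<And>e. e \<in> E \<Longrightarrow> fst (A e) \<subseteq> V"
    and hV: "\<And>e. e \<in> E \<Longrightarrow> snd (A e) \<in> V" using H unfolding dir_hypergraph_def by auto
  have finX: "\<And>e. e \<in> E \<Longrightarrow> finite (fst (A e))" using XV finV finite_subset by blast
  define W where "W = aux_vertices V E"
  define f where "f = graph_dout (aux_arcs E A)"
  define h where "h = hyp_dout E A"
  define proj :: "('a + 'e) set \<Rightarrow> 'a set" where "proj Z' = {v \<in> V. Inl v \<in> Z'}" for Z'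
  define ext :: "'a set \<Rightarrow> ('a + 'e) set" where "ext Z = Inl ` Z \<union> Inr ` {e\<in>E. fst (A e) \<inter> Z \<noteq> {}}" for Z
  define n where "n = card E + 1"
  have fZ: "f Z = (\<Sum>e\<in>E. (if Inr e \<in> Z \<and> Inl (snd (A e)) \<notin> Z then 1 else 0)
     + n * card {x\<in>fst (A e). Inl x \<in> Z \<and> Inr e \<notin> Z})" for Z
    unfolding f_def n_def by (rule cost1[OF finE finX])
  have hZ: "h Z = (\<Sum>e\<in>E. if snd (A e) \<notin> Z \<and> fst (A e) \<inter> Z \<noteq> {} then 1 else 0)" for Z
    unfolding h_def using hyp_dout_sum[OF finE] .
  have ex: "\<exists>S. min_separator V h s t S \<and> (\<forall>Z'. min_separator V h s t Z' \<longrightarrow> S \<subseteq> Z')"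
  proof (rule exists_smallest[OF finV \<open>s \<in> V\<close> \<open>s \<noteq> t\<close>])
    fix X Y :: "'a set"
    show "h (X \<inter> Y) + h (X \<union> Y) \<le> h X + h Y"
      unfolding hZ sum.distrib[symmetric] by (rule sum_mono) (rule submod1)
  qed
  then obtain S where S: "min_separator V h s t S" "\<forall>Z'. min_separator V h s t Z' \<longrightarrow> S \<subseteq> Z'" by blast
  have SV: "S \<subseteq> V" using S unfolding min_separator_def separator_def by blast
  have hle: "h Z \<le> card E" for Z
    unfolding h_def hyp_dout_def using finE by (simp add: card_mono)
  have feq: "f (ext Z) = h Z" for Z
    unfolding hZ fZ
  proof (rule sum.cong[OF refl])
    fix e assume e: "e \<in> E"
    have c0: "{x\<in>fst (A e). Inl x \<in> ext Z \<and> Inr e \<notin> ext Z} = {}" using e unfolding ext_def by auto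
    have ci: "(Inr e \<in> ext Z \<and> Inl (snd (A e)) \<notin> ext Z) = (snd (A e) \<notin> Z \<and> fst (A e) \<inter> Z \<noteq> {})"
      using e unfolding ext_def by auto
    show "(if Inr e \<in> ext Z \<and> Inl (snd (A e)) \<notin> ext Z then 1 else 0) + n * card {x\<in>fst (A e). Inl x \<in> ext Z \<and> Inr e \<notin> ext Z}
      = (if snd (A e) \<notin> Z \<and> fst (A e) \<inter> Z \<noteq> {} then 1 else 0)" by (simp only: c0 ci card.empty mult_0_right add_0_right)
  qed
  have "S = proj (smallest_min_sep W f (Inl s) (Inl t))"
  proof (rule transfer[OF S, where ext=ext])
    show "separator V s t (proj Z')" if "separator W (Inl s) (Inl t) Z'" for Z'
      using that unfolding separator_def proj_def W_def aux_vertices_def by auto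
    show "separator W (Inl s) (Inl t) (ext Z)" if "separator V s t Z" for Z
      using that unfolding separator_def ext_def W_def aux_vertices_def by auto
    show "proj (ext S) = S" using SV unfolding proj_def ext_def by auto
    show "h (proj Z') \<le> f Z'" if Z': "separator W (Inl s) (Inl t) Z'" for Z'
      unfolding hZ fZ
    proof (rule sum_mono)
      fix e assume e: "e \<in> E"
      show "(if snd (A e) \<notin> proj Z' \<and> fst (A e) \<inter> proj Z' \<noteq> {} then 1 else 0)
         \<le> (if Inr e \<in> Z' \<and> Inl (snd (A e)) \<notin> Z' then 1 else 0) + n * card {x\<in>fst (A e). Inl x \<in> Z' \<and> Inr e \<notin> Z'}"
      proof (cases "snd (A e) \<notin> proj Z' \<and> fst (A e) \<inter> proj Z' \<noteq> {}")
        case True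
        then obtain x where x: "x \<in> fst (A e)" "Inl x \<in> Z'" unfolding proj_def by auto
        have hd: "Inl (snd (A e)) \<notin> Z'" using True hV[OF e] unfolding proj_def by auto
        show ?thesis
        proof (cases "Inr e \<in> Z'")
          case True then show ?thesis using hd by simp
        next
          case False
          then have "x \<in> {x\<in>fst (A e). Inl x \<in> Z' \<and> Inr e \<notin> Z'}" using x by auto
          then have "card {x\<in>fst (A e). Inl x \<in> Z' \<and> Inr e \<notin> Z'} \<ge> 1"
            by (rule card_ge1[OF finX[OF e]])
          then have "1 \<le> n * card {x\<in>fst (A e). Inl x \<in> Z' \<and> Inr e \<notin> Z'}"
            unfolding n_def by (metis One_nat_def le_add2 mult_le_mono nat_mult_1)
          then show ?thesis using True by simp
        qed
      next
        case False
        show ?thesis by (subst if_not_P[OF False]) simp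
      qed
    qed
    show "f (ext Z) = h Z" if "separator V s t Z" for Z by (rule feq)
    show "ext S \<subseteq> Z'" if Z': "min_separator W f (Inl s) (Inl t) Z'" and SZ: "S \<subseteq> proj Z'" for Z'
    proof
      fix y assume y: "y \<in> ext S"
      show "y \<in> Z'"
      proof (cases y)
        case (Inl v) then show ?thesis using y SZ unfolding ext_def proj_def by auto
      next
        case (Inr e)
        then have e: "e \<in> E" and "fst (A e) \<inter> S \<noteq> {}" using y unfolding ext_def by auto
        then obtain x where x: "x \<in> fst (A e)" "x \<in> S" by auto
        show ?thesis
        proof (rule ccontr)
          assume "y \<notin> Z'"
          then have "x \<in> {x\<in>fst (A e). Inl x \<in> Z' \<and> Inr e \<notin> Z'}" using x SZ Inr unfolding proj_def by auto
          then have c1: "card {x\<in>fst (A e). Inl x \<in> Z' \<and> Inr e \<notin> Z'} \<ge> 1"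
            by (rule card_ge1[OF finX[OF e]])
          have "n \<le> (if Inr e \<in> Z' \<and> Inl (snd (A e)) \<notin> Z' then 1 else 0) + n * card {x\<in>fst (A e). Inl x \<in> Z' \<and> Inr e \<notin> Z'}"
            by (rule trans_le_add2) (use mult_le_mono2[OF c1, of n] in simp)
          also have "\<dots> \<le> f Z'" unfolding fZ
            by (rule member_le_sum[OF e _ finE]) (rule zero_le)
          also have "\<dots> \<le> f (ext S)"
          proof -
            have "separator V s t S" using S(1) unfolding min_separator_def by simp
            then have "separator W (Inl s) (Inl t) (ext S)"
              unfolding separator_def ext_def W_def aux_vertices_def by auto
            then show ?thesis using Z' unfolding min_separator_def by simp
          qed
          also have "f (ext S) = h S" by (rule feq)
          also have "\<dots> \<le> card E" by (rule hle)
          finally show False unfolding n_def by simp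
        qed
      qed
    qed
  qed
  moreover have "smallest_min_sep V h s t = S" by (rule smallest_eq[OF S(1)]) (use S(2) in blast)
  moreover have "proj (smallest_min_sep W f (Inl s) (Inl t)) = {v \<in> V. Inl v \<in> smallest_min_sep W f (Inl s) (Inl t)}"
    by (rule proj_def)
  ultimately show ?thesis unfolding h_def f_def W_def by simp
qed



lemma part2:
  fixes V :: "'a set" and E :: "'e set" and A :: "'e \<Rightarrow> 'a set \<times> 'a" and s t :: 'a
  assumes H: "dir_hypergraph V E A"
    and "s \<in> V" and "t \<in> V" and "s \<noteq> t"
  shows "smallest_min_sep V (hyp_din E A) t s =
           {v \<in> V. Inl v \<in> smallest_min_sep (aux_vertices V E) (graph_dout (reverse_arcs (aux_arcs E A))) (Inl t) (Inl s)}"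
proof -
  have finV: "finite V" and finE: "finite E" and XV: "\<And>e. e \<in> E \<Longrightarrow> fst (A e) \<subseteq> V"
    and hV: "\<And>e. e \<in> E \<Longrightarrow> snd (A e) \<in> V" using H unfolding dir_hypergraph_def by auto
  have finX: "\<And>e. e \<in> E \<Longrightarrow> finite (fst (A e))" using XV finV finite_subset by blast
  have ts: "t \<noteq> s" using \<open>s \<noteq> t\<close> by simp
  define W where "W = aux_vertices V E"
  define f where "f = graph_dout (reverse_arcs (aux_arcs E A))"
  define h where "h = hyp_din E A"
  define proj :: "('a + 'e) set \<Rightarrow> 'a set" where "proj Z' = {v \<in> V. Inl v \<in> Z'}" for Z'
  define ext :: "'a set \<Rightarrow> ('a + 'e) set" where "ext Z = Inl ` Z \<union> Inr ` {e\<in>E. fst (A e) \<subseteq> Z \<and> snd (A e) \<in> Z}" for Z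
  define n where "n = card E + 1"
  define g where "g e Z = (if Inl (snd (A e)) \<in> Z \<and> Inr e \<notin> Z then 1 else 0)
     + n * card {x\<in>fst (A e). Inr e \<in> Z \<and> Inl x \<notin> Z}" for e and Z :: "('a + 'e) set"
  have fZ: "f Z = (\<Sum>e\<in>E. g e Z)" for Z
    unfolding f_def n_def g_def by (rule cost2[OF finE finX])
  have hZ: "h Z = (\<Sum>e\<in>E. if snd (A e) \<in> Z \<and> \<not> fst (A e) \<subseteq> Z then 1 else 0)" for Z
    unfolding h_def using hyp_din_sum[OF finE] .
  have ex: "\<exists>S. min_separator V h t s S \<and> (\<forall>Z'. min_separator V h t s Z' \<longrightarrow> S \<subseteq> Z')"
  proof (rule exists_smallest[OF finV \<open>t \<in> V\<close> ts])
    fix X Y :: "'a set"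
    show "h (X \<inter> Y) + h (X \<union> Y) \<le> h X + h Y"
      unfolding hZ sum.distrib[symmetric] by (rule sum_mono) (rule submod2)
  qed
  then obtain S where S: "min_separator V h t s S" "\<forall>Z'. min_separator V h t s Z' \<longrightarrow> S \<subseteq> Z'" by blast
  have SV: "S \<subseteq> V" using S(1) unfolding min_separator_def separator_def by simp
  have feq: "f (ext Z) = h Z" for Z
    unfolding hZ fZ
  proof (rule sum.cong[OF refl])
    fix e assume e: "e \<in> E"
    have c0: "{x\<in>fst (A e). Inr e \<in> ext Z \<and> Inl x \<notin> ext Z} = {}" using e unfolding ext_def by auto
    have ci: "(Inl (snd (A e)) \<in> ext Z \<and> Inr e \<notin> ext Z) = (snd (A e) \<in> Z \<and> \<not> fst (A e) \<subseteq> Z)"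
      using e unfolding ext_def by auto
    show "g e (ext Z) = (if snd (A e) \<in> Z \<and> \<not> fst (A e) \<subseteq> Z then 1 else 0)"
      unfolding g_def by (simp only: c0 ci card.empty mult_0_right add_0_right)
  qed
  have "S = proj (smallest_min_sep W f (Inl t) (Inl s))"
  proof (rule transfer[OF S, where ext=ext])
    show "separator V t s (proj Z')" if "separator W (Inl t) (Inl s) Z'" for Z'
      using that unfolding separator_def proj_def W_def aux_vertices_def by auto
    show "separator W (Inl t) (Inl s) (ext Z)" if "separator V t s Z" for Z
      using that unfolding separator_def ext_def W_def aux_vertices_def by auto
    show "proj (ext S) = S" using SV unfolding proj_def ext_def by auto
    show "h (proj Z') \<le> f Z'" if Z': "separator W (Inl t) (Inl s) Z'" for Z'
      unfolding hZ fZ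
    proof (rule sum_mono)
      fix e assume e: "e \<in> E"
      show "(if snd (A e) \<in> proj Z' \<and> \<not> fst (A e) \<subseteq> proj Z' then 1 else 0) \<le> g e Z'"
      proof (cases "snd (A e) \<in> proj Z' \<and> \<not> fst (A e) \<subseteq> proj Z'")
        case True
        then obtain x where x: "x \<in> fst (A e)" "x \<notin> proj Z'" by auto
        then have x': "Inl x \<notin> Z'" using XV[OF e] unfolding proj_def by auto
        have hd: "Inl (snd (A e)) \<in> Z'" using True unfolding proj_def by auto
        show ?thesis
        proof (cases "Inr e \<in> Z'")
          case False then show ?thesis using hd True unfolding g_def by simp
        next
          case True
          then have "x \<in> {x\<in>fst (A e). Inr e \<in> Z' \<and> Inl x \<notin> Z'}" using x x' by auto
          then have "card {x\<in>fst (A e). Inr e \<in> Z' \<and> Inl x \<notin> Z'} \<ge> 1"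
            by (rule card_ge1[OF finX[OF e]])
          then have "1 \<le> n * card {x\<in>fst (A e). Inr e \<in> Z' \<and> Inl x \<notin> Z'}"
            unfolding n_def by (metis One_nat_def le_add2 mult_le_mono nat_mult_1)
          then show ?thesis unfolding g_def by (simp add: trans_le_add2)
        qed
      next
        case False
        show ?thesis by (subst if_not_P[OF False]) simp
      qed
    qed
    show "f (ext Z) = h Z" if "separator V t s Z" for Z by (rule feq)
    show "ext S \<subseteq> Z'" if Z': "min_separator W f (Inl t) (Inl s) Z'" and SZ: "S \<subseteq> proj Z'" for Z'
    proof
      fix y assume y: "y \<in> ext S"
      show "y \<in> Z'"
      proof (cases y)
        case (Inl v) then show ?thesis using y SZ unfolding ext_def proj_def by auto
      next
        case (Inr e)
        then have e: "e \<in> E" and XS: "fst (A e) \<subseteq> S" and hS: "snd (A e) \<in> S" using y unfolding ext_def by auto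
        show ?thesis
        proof (rule ccontr)
          assume "y \<notin> Z'"
          then have nZ: "Inr e \<notin> Z'" using Inr by simp
          define Z'' where "Z'' = insert (Inr e) Z'"
          have sZ': "separator W (Inl t) (Inl s) Z'" using Z' unfolding min_separator_def by simp
          have sZ'': "separator W (Inl t) (Inl s) Z''"
            using sZ' e unfolding Z''_def separator_def W_def aux_vertices_def by auto
          have "f Z' \<le> f Z''" using Z' sZ'' unfolding min_separator_def by simp
          moreover have "f Z' = g e Z' + (\<Sum>e'\<in>E - {e}. g e' Z')" unfolding fZ by (rule sum.remove[OF finE e])
          moreover have "f Z'' = g e Z'' + (\<Sum>e'\<in>E - {e}. g e' Z'')" unfolding fZ by (rule sum.remove[OF finE e])
          moreover have "(\<Sum>e'\<in>E - {e}. g e' Z'') = (\<Sum>e'\<in>E - {e}. g e' Z')"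
          proof (rule sum.cong[OF refl])
            fix e' assume "e' \<in> E - {e}"
            then have "e' \<noteq> e" by simp
            then have a1: "(Inr e' \<in> Z'') = (Inr e' \<in> Z')" and a2: "\<And>v. (Inl v \<in> Z'') = (Inl v \<in> Z')"
              unfolding Z''_def by auto
            show "g e' Z'' = g e' Z'" unfolding g_def a1 a2 ..
          qed
          moreover have "g e Z' \<ge> 1"
          proof -
            have "Inl (snd (A e)) \<in> Z'" using hS SZ unfolding proj_def by auto
            then show ?thesis using nZ unfolding g_def by simp
          qed
          moreover have "g e Z'' = 0"
          proof -
            have c0: "{x\<in>fst (A e). Inr e \<in> Z'' \<and> Inl x \<notin> Z''} = {}"
              using XS SZ unfolding Z''_def proj_def by auto
            have c1: "Inr e \<in> Z''" unfolding Z''_def by simp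
            show ?thesis unfolding g_def c0 using c1 by simp
          qed
          ultimately show False by linarith
        qed
      qed
    qed
  qed
  moreover have "smallest_min_sep V h t s = S" by (rule smallest_eq[OF S(1)]) (use S(2) in blast)
  moreover have "proj (smallest_min_sep W f (Inl t) (Inl s)) = {v \<in> V. Inl v \<in> smallest_min_sep W f (Inl t) (Inl s)}"
    by (rule proj_def)
  ultimately show ?thesis unfolding h_def f_def W_def by simp
qed


theorem mainTheorem14:
  fixes V :: "'a set" and E :: "'e set" and A :: "'e \<Rightarrow> 'a set \<times> 'a" and s t :: 'a
  assumes "dir_hypergraph V E A"
    and "s \<in> V" and "t \<in> V" and "s \<noteq> t"
  shows "smallest_min_sep V (hyp_dout E A) s t =
           {v \<in> V. Inl v \<in> smallest_min_sep (aux_vertices V E) (graph_dout (aux_arcs E A)) (Inl s) (Inl t)} \<and>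
         smallest_min_sep V (hyp_din E A) t s =
           {v \<in> V. Inl v \<in> smallest_min_sep (aux_vertices V E) (graph_dout (reverse_arcs (aux_arcs E A))) (Inl t) (Inl s)}"
  using part1[OF assms] part2[OF assms] by blast

end
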